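(* Let $0 \le \alpha \le \beta < \infty$, let $\varphi\colon \mathbb{R} \to \mathbb{R}$ satisfy $\alpha \le \frac{\varphi(a) - \varphi(b)}{a - b} \le \beta$ for all $a \ne b$, and let $\phi\colon \mathbb{R}^{n_1}\to\mathbb{R}^{n_1}$ act componentwise by $\varphi$. Let $H \in \mathbb{R}^{m \times n_0}$, $G \in \mathbb{R}^{m \times n_1}$, $W \in \mathbb{R}^{n_1 \times n_0}$ and $h(x) = Hx + G\phi(Wx)$. Suppose $T \in \mathbb{R}^{n_1 \times n_1}$ is diagonal and satisfies $G^\top G \preceq T$. Then for all $x, x' \in \mathbb{R}^{n_0}$, $$\|h(x) - h(x')\|_2 \le \Big(\Big\|H + \frac{\alpha+\beta}{2} G W\Big\|_2 + \frac{\beta - \alpha}{2}\,\|W^\top T W\|_2^{1/2}\Big)\|x - x'\|_2.$$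
   Context: $\|A\|_2$ denotes the spectral norm (largest singular value) of a matrix $A$; $\preceq$ is the Loewner order on symmetric matrices. *)

theory Defs
  imports "HOL-Analysis.Analysis"
begin

definition spec_norm :: "real^'n^'m \<Rightarrow> real" where
  "spec_norm A = onorm (\<lambda>x. A *v x)"

definition loewner_le :: "real^'n^'n \<Rightarrow> real^'n^'n \<Rightarrow> bool" where
  "loewner_le A B \<longleftrightarrow> transpose A = A \<and> transpose B = B \<and>
     (\<forall>x. x \<bullet> ((B - A) *v x) \<ge> 0)"

definition diagonal_mat :: "real^'n^'n \<Rightarrow> bool" where
  "diagonal_mat T \<longleftrightarrow> (\<forall>i j. i \<noteq> j \<longrightarrow> T $ i $ j = 0)"

end

theory Submission
  imports Defs
begin

lemma inner_transpose_mv: "inner (A *v x) y = inner x (transpose A *v (y::real^'m))"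
  for A :: "real^'n^'m"
  by (metis dot_lmul_matrix inner_commute transpose_matrix_vector)

lemma spec_norm_bound: "norm (A *v x) \<le> spec_norm A * norm x"
  unfolding spec_norm_def by (rule onorm) simp

lemma spec_norm_nonneg: "0 \<le> spec_norm A"
  unfolding spec_norm_def by (rule onorm_pos_le) simp

lemma gram_quad: "inner v ((transpose G ** G) *v v) = (norm (G *v v))^2"
  for G :: "real^'n^'m"
  by (simp only: matrix_vector_mul_assoc[symmetric] inner_transpose_mv[symmetric] power2_norm_eq_inner)

lemma diag_quad:
  assumes "diagonal_mat T"
  shows "inner v (T *v v) = (\<Sum>i\<in>UNIV. T$i$i * (v$i)^2)"
proof -
  have "(T *v v)$i = T$i$i * v$i" for i
  proof -
    have "(T *v v)$i = (\<Sum>j\<in>UNIV. T$i$j * v$j)" by (simp add: matrix_vector_mult_def)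
    also have "\<dots> = T$i$i * v$i"
      by (rule sum.remove[where x=i, THEN trans]) (use assms in \<open>auto simp: diagonal_mat_def intro!: sum.neutral\<close>)
    finally show ?thesis .
  qed
  then show ?thesis by (simp add: inner_vec_def power2_eq_square mult_ac)
qed

theorem mainTheorem5:
  fixes \<alpha> \<beta> :: real
    and \<phi> :: "real \<Rightarrow> real"
    and H :: "real^'n0^'m" and G :: "real^'n1^'m" and W :: "real^'n0^'n1"
    and T :: "real^'n1^'n1"
    and h :: "real^'n0 \<Rightarrow> real^'m"
    and x x' :: "real^'n0"
  assumes "0 \<le> \<alpha>" and "\<alpha> \<le> \<beta>"
    and "\<And>a b. a \<noteq> b \<Longrightarrow> \<alpha> \<le> (\<phi> a - \<phi> b) / (a - b) \<and> (\<phi> a - \<phi> b) / (a - b) \<le> \<beta>"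
    and "h = (\<lambda>y. H *v y + G *v (\<chi> i. \<phi> ((W *v y) $ i)))"
    and "diagonal_mat T"
    and "loewner_le (transpose G ** G) T"
  shows "norm (h x - h x') \<le>
    (spec_norm (H + ((\<alpha> + \<beta>) / 2) *\<^sub>R (G ** W))
      + ((\<beta> - \<alpha>) / 2) * sqrt (spec_norm (transpose W ** T ** W))) * norm (x - x')"
proof -
  define c where "c = (\<alpha> + \<beta>) / 2"
  define r where "r = (\<beta> - \<alpha>) / 2"
  define d where "d = x - x'"
  define u where "u = W *v d"
  define s where "s i = (if u$i = 0 then c else (\<phi> ((W *v x)$i) - \<phi> ((W *v x')$i)) / u$i)" for i
  define e where "e = (\<chi> i. (s i - c) * u$i)"
  define S where "S = spec_norm (transpose W ** T ** W)"
  have r0: "0 \<le> r" using assms(2) by (simp add: r_def)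
  have S0: "0 \<le> S" unfolding S_def by (rule spec_norm_nonneg)
  have ui: "u$i = (W *v x)$i - (W *v x')$i" for i
    by (simp add: u_def d_def matrix_vector_mult_diff_distrib)
  have sr: "\<bar>s i - c\<bar> \<le> r" for i
  proof (cases "u$i = 0")
    case True then show ?thesis using r0 by (simp add: s_def)
  next
    case False
    hence ne: "(W *v x)$i \<noteq> (W *v x')$i" using ui by simp
    from assms(3)[OF ne] have "\<alpha> \<le> s i" "s i \<le> \<beta>" using False by (auto simp: s_def ui)
    then show ?thesis unfolding c_def r_def abs_le_iff by (auto simp: field_simps)
  qed
  have delta: "(\<chi> i. \<phi> ((W *v x) $ i)) - (\<chi> i. \<phi> ((W *v x') $ i)) = c *\<^sub>R u + e"
  proof (subst vec_eq_iff, intro allI)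
    fix i
    show "((\<chi> i. \<phi> ((W *v x) $ i)) - (\<chi> i. \<phi> ((W *v x') $ i)))$i = (c *\<^sub>R u + e)$i"
    proof (cases "u$i = 0")
      case True
      then have "(W *v x)$i = (W *v x')$i" using ui by simp
      then show ?thesis using True by (simp add: e_def)
    next
      case False
      then have "s i * u$i = \<phi> ((W *v x)$i) - \<phi> ((W *v x')$i)" by (simp add: s_def)
      then show ?thesis by (simp add: e_def algebra_simps)
    qed
  qed
  have hd: "h x - h x' = (H + c *\<^sub>R (G ** W)) *v d + G *v e"
  proof -
    have "h x - h x' = H *v d + G *v ((\<chi> i. \<phi> ((W *v x) $ i)) - (\<chi> i. \<phi> ((W *v x') $ i)))"
      by (simp add: assms(4) d_def matrix_vector_mult_diff_distrib algebra_simps)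
    also have "\<dots> = H *v d + c *\<^sub>R (G *v u) + G *v e"
      by (simp add: delta matrix_vector_right_distrib matrix_vector_mult_scaleR)
    also have "\<dots> = (H + c *\<^sub>R (G ** W)) *v d + G *v e"
      by (simp add: u_def matrix_vector_mul_assoc matrix_vector_mult_add_rdistrib
          scaleR_matrix_vector_assoc)
    finally show ?thesis .
  qed
  have L: "\<forall>v. inner v ((T - transpose G ** G) *v v) \<ge> 0"
    using assms(6) by (simp add: loewner_le_def)
  have Tge: "inner v ((transpose G ** G) *v v) \<le> inner v (T *v v)" for v
    using L[rule_format, of v] by (simp add: matrix_vector_mult_diff_rdistrib inner_diff_right)
  have Tii: "0 \<le> T$i$i" for i
  proof -
    have "0 \<le> inner (axis i 1) ((transpose G ** G) *v axis i 1)" by (simp add: gram_quad)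
    also have "\<dots> \<le> inner (axis i (1::real)) (T *v axis i 1)" by (rule Tge)
    also have "\<dots> = T$i$i" unfolding diag_quad[OF assms(5)]
      by (subst sum.remove[of UNIV i]) (auto simp: axis_def intro!: sum.neutral)
    finally show ?thesis .
  qed
  have "(norm (G *v e))^2 \<le> inner e (T *v e)" using Tge[of e] by (simp add: gram_quad)
  also have "\<dots> = (\<Sum>i\<in>UNIV. T$i$i * (e$i)^2)" by (rule diag_quad[OF assms(5)])
  also have "\<dots> \<le> (\<Sum>i\<in>UNIV. r^2 * (T$i$i * (u$i)^2))"
  proof (rule sum_mono)
    fix i
    have "(s i - c)^2 \<le> r^2" using sr[of i] by (metis abs_ge_zero power2_abs power_mono)
    hence "(e$i)^2 \<le> r^2 * (u$i)^2" by (simp add: e_def power_mult_distrib mult_right_mono)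
    then show "T$i$i * (e$i)^2 \<le> r^2 * (T$i$i * (u$i)^2)"
      using mult_left_mono[OF _ Tii[of i]] by (metis mult.left_commute)
  qed
  also have "\<dots> = r^2 * inner u (T *v u)" by (simp add: diag_quad[OF assms(5)] sum_distrib_left)
  also have "inner u (T *v u) = inner d ((transpose W ** T ** W) *v d)"
    by (simp only: u_def inner_transpose_mv matrix_vector_mul_assoc matrix_mul_assoc)
  also have "\<dots> \<le> norm d * (S * norm d)"
    using norm_cauchy_schwarz[of d] spec_norm_bound[of "transpose W ** T ** W" d]
    unfolding S_def by (meson mult_left_mono norm_ge_zero order_trans)
  finally have "(norm (G *v e))^2 \<le> r^2 * (norm d * (S * norm d))"
    by (simp add: mult_left_mono)
  hence "(norm (G *v e))^2 \<le> (r * sqrt S * norm d)^2"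
  proof -
    have "(r * sqrt S * norm d)^2 = r^2 * (norm d * (S * norm d))"
      unfolding power_mult_distrib real_sqrt_pow2[OF S0] by (simp add: power2_eq_square mult_ac)
    then show ?thesis using \<open>(norm (G *v e))^2 \<le> r^2 * (norm d * (S * norm d))\<close> by simp
  qed
  hence Ge: "norm (G *v e) \<le> r * sqrt S * norm d"
    by (rule power2_le_imp_le) (use r0 S0 in simp)
  have "norm (h x - h x') \<le> norm ((H + c *\<^sub>R (G ** W)) *v d) + norm (G *v e)"
    unfolding hd by (rule norm_triangle_ineq)
  also have "\<dots> \<le> spec_norm (H + c *\<^sub>R (G ** W)) * norm d + r * sqrt S * norm d"
    using spec_norm_bound Ge by (rule add_mono)
  finally show ?thesis by (simp add: c_def r_def S_def d_def algebra_simps)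
qed

end
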